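(* Let $c\in(0,1)$ and let $\sigma>0$ satisfy $C_{\mathrm{BS}}(\sigma)=c$. Let $g(y)=\log C_{\mathrm{BS}}(y)-\log c$ for $y>0$. The Newton–Raphson iteration $\sigma_{n+1}=\sigma_n-g(\sigma_n)/g'(\sigma_n)$ for the equation $g(y)=0$ can be written as $\sigma_{n+1}=N(\sigma_n)$ with $$N(y)=y+\left[\frac{d_1(y)^2}{2}-\log C_{\mathcal V}(y)+\log\!\big(c\sqrt{2\pi}\big)\right]C_{\mathcal V}(y).$$ Moreover, if $0<\sigma_0\le\sigma$, then the iterates satisfy $\sigma_0\le\sigma_1\le\sigma_2\le\cdots\le\sigma$ and $\sigma_n\to\sigma$ as $n\to\infty$.
   Context: Fix $k\ge 0$. Let $\Phi$ and $\phi$ denote the standard normal distribution function and density. For $\sigma>0$ put $d_1(\sigma)=-k/\sigma+\sigma/2$, $d_2(\sigma)=-k/\sigma-\sigma/2$, and $C_{\mathrm{BS}}(\sigma)=\Phi(d_1(\sigma))-e^k\,\Phi(d_2(\sigma))$, a strictly increasing bijection from $(0,\infty)$ onto $(0,1)$; for $c\in(0,1)$ the implied volatility is the unique $\sigma>0$ with $C_{\mathrm{BS}}(\sigma)=c$. The price-to-vega ratio is $C_{\mathcal V}(y)=C_{\mathrm{BS}}(y)/\phi(d_1(y))$. *)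

theory Defs
  imports "HOL-Probability.Probability"
begin

definition npdf :: "real \<Rightarrow> real" where
  "npdf x = exp (- x\<^sup>2 / 2) / sqrt (2 * pi)"

definition ncdf :: "real \<Rightarrow> real" where
  "ncdf x = (LBINT t:{..x}. npdf t)"

definition d1 :: "real \<Rightarrow> real \<Rightarrow> real" where
  "d1 k s = - k / s + s / 2"

definition d2 :: "real \<Rightarrow> real \<Rightarrow> real" where
  "d2 k s = - k / s - s / 2"

definition C_BS :: "real \<Rightarrow> real \<Rightarrow> real" where
  "C_BS k s = ncdf (d1 k s) - exp k * ncdf (d2 k s)"

definition C_V :: "real \<Rightarrow> real \<Rightarrow> real" where
  "C_V k y = C_BS k y / npdf (d1 k y)"

definition newton_map :: "real \<Rightarrow> real \<Rightarrow> real \<Rightarrow> real" where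
  "newton_map k c y = y + ((d1 k y)\<^sup>2 / 2 - ln (C_V k y) + ln (c * sqrt (2 * pi))) * C_V k y"

end

theory Submission imports Defs "HOL-Real_Asymp.Real_Asymp" begin

lemma npdf_std: "npdf = std_normal_density"
  by (rule ext) (simp add: npdf_def normal_density_def)

lemma npdf_pos: "npdf x > 0"
  by (simp add: npdf_def)

lemma npdf_deriv: "(npdf has_real_derivative (- x * npdf x)) (at x)"
  unfolding npdf_def
  by (auto intro!: derivative_eq_intros simp: power2_eq_square field_simps)

lemma npdf_cont: "continuous_on S npdf"
  unfolding npdf_def by (intro continuous_intros) auto

lemma npdf_integrable: "integrable lborel npdf"
  by (simp add: npdf_std)

lemma npdf_set_integrable: "set_integrable lborel A npdf"
  if "A \<in> sets borel"
  unfolding set_integrable_def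
  using that npdf_integrable by (intro integrable_mult_indicator) auto

lemma ncdf_split:
  assumes "a \<le> x"
  shows "ncdf x = (LBINT t:{..<a}. npdf t) + integral {a..x} npdf"
proof -
  have "{..x} = {..<a} \<union> {a..x}" using assms by auto
  then have "ncdf x = (LBINT t:{..<a}. npdf t) + (LBINT t:{a..x}. npdf t)"
    unfolding ncdf_def
    by (simp only:) (rule set_integral_Un, auto simp: npdf_set_integrable)
  also have "(LBINT t:{a..x}. npdf t) = integral {a..x} npdf"
    by (rule set_borel_integral_eq_integral(2)) (simp add: npdf_set_integrable)
  finally show ?thesis .
qed

lemma ncdf_deriv: "(ncdf has_real_derivative npdf x) (at x)"
proof -
  have "((\<lambda>u. (LBINT t:{..<x-1}. npdf t) + integral {x-1..u} npdf) has_real_derivative npdf x)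
         (at x within {x-1..x+1})"
    by (auto intro!: derivative_eq_intros integral_has_real_derivative npdf_cont)
  then have "((\<lambda>u. (LBINT t:{..<x-1}. npdf t) + integral {x-1..u} npdf) has_real_derivative npdf x)
         (at x within {x-1<..<x+1})"
    by (rule DERIV_subset) auto
  then have "((\<lambda>u. (LBINT t:{..<x-1}. npdf t) + integral {x-1..u} npdf) has_real_derivative npdf x)
         (at x)"
    by (subst (asm) at_within_open) auto
  then show ?thesis
    by (rule has_field_derivative_transform_within_open[where S="{x-1<..<x+1}"])
       (auto simp: ncdf_split[of "x-1"])
qed

lemma ncdf_nonneg: "ncdf x \<ge> 0"
  unfolding ncdf_def set_lebesgue_integral_def
  by (intro integral_nonneg_AE) (auto simp: npdf_pos less_imp_le)

lemma ncdf_at_bot: "(ncdf \<longlongrightarrow> 0) at_bot"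
proof -
  have lim: "((\<lambda>a. LBINT t:{a..0}. npdf t) \<longlongrightarrow> ncdf 0) at_bot"
    unfolding ncdf_def
    by (rule tendsto_set_lebesgue_integral_at_bot) (auto simp: npdf_set_integrable)
  have eq: "ncdf a = ncdf 0 - (LBINT t:{a..0}. npdf t)" if "a \<le> 0" for a
  proof -
    have "ncdf 0 = (LBINT t:{..<a}. npdf t) + (LBINT t:{a..0}. npdf t)"
      unfolding ncdf_def using that
      by (subst set_integral_Un[symmetric]) (auto simp: npdf_set_integrable intro!: arg_cong[where f="\<lambda>A. set_lebesgue_integral lborel A npdf"])
    moreover have "ncdf a = (LBINT t:{..<a}. npdf t)"
      unfolding ncdf_def
    proof (rule set_integral_null_delta)
      have "{..a} - {..<a} \<union> ({..<a} - {..a}) = {a}" by auto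
      then show "{..a} - {..<a} \<union> ({..<a} - {..a}) \<in> null_sets lborel" by (simp add: finite_imp_null_set_lborel)
    qed (auto simp: npdf_integrable)
    ultimately show ?thesis by simp
  qed
  have "((\<lambda>a. ncdf 0 - (LBINT t:{a..0}. npdf t)) \<longlongrightarrow> ncdf 0 - ncdf 0) at_bot"
    by (intro tendsto_intros lim)
  then have "((\<lambda>a. ncdf 0 - (LBINT t:{a..0}. npdf t)) \<longlongrightarrow> 0) at_bot" by simp
  moreover have "\<forall>\<^sub>F a in at_bot. ncdf 0 - (LBINT t:{a..0}. npdf t) = ncdf a"
    unfolding eventually_at_bot_linorder by (rule exI[of _ 0]) (metis eq)
  ultimately show ?thesis
    by (rule Lim_transform_eventually)
qed

lemma ncdf_deriv_chain[derivative_intros]: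
  "(f has_real_derivative f') (at x within S) \<Longrightarrow>
   ((\<lambda>x. ncdf (f x)) has_real_derivative npdf (f x) * f') (at x within S)"
  using DERIV_chain2[OF ncdf_deriv] by blast

lemma npdf_deriv_chain[derivative_intros]:
  "(f has_real_derivative f') (at x within S) \<Longrightarrow>
   ((\<lambda>x. npdf (f x)) has_real_derivative (- f x * npdf (f x)) * f') (at x within S)"
  using DERIV_chain2[OF npdf_deriv] by blast

lemma mills_upper:
  assumes t: "t < 0"
  shows "ncdf t < npdf t / (- t)"
proof -
  define H where "H x = npdf x / (- x) - ncdf x" for x
  have lim: "(H \<longlongrightarrow> 0 - 0) at_bot"
    unfolding H_def
  proof (intro tendsto_intros ncdf_at_bot)
    show "((\<lambda>x. npdf x / - x) \<longlongrightarrow> 0) at_bot"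
      unfolding npdf_def by real_asymp
  qed
  have "0 < H t"
  proof (rule DERIV_pos_imp_increasing_at_bot[where flim=0 and b=t and f=H])
    fix x assume "x \<le> t"
    then have x: "x < 0" using t by simp
    have "(H has_real_derivative (npdf x / x\<^sup>2)) (at x)"
      unfolding H_def using x
      by (auto intro!: derivative_eq_intros simp: power2_eq_square field_simps)
    moreover have "npdf x / x\<^sup>2 > 0" using x by (simp add: npdf_pos)
    ultimately show "\<exists>y. DERIV H x :> y \<and> 0 < y"
      by blast
  qed (use lim in simp)
  then show ?thesis unfolding H_def by simp
qed

lemma mills_lower:
  shows "ncdf t + t * npdf t / (1 + t\<^sup>2) > 0"
proof -
  define G where "G x = ncdf x + x * npdf x / (1 + x\<^sup>2)" for x
  have lim: "(G \<longlongrightarrow> 0 + 0) at_bot"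
    unfolding G_def
  proof (intro tendsto_intros ncdf_at_bot)
    show "((\<lambda>x. x * npdf x / (1 + x\<^sup>2)) \<longlongrightarrow> 0) at_bot"
      unfolding npdf_def by real_asymp
  qed
  have "0 < G t"
  proof (rule DERIV_pos_imp_increasing_at_bot[where flim=0 and b=t and f=G])
    fix x assume "x \<le> t"
    have pos: "1 + x\<^sup>2 > 0" by (simp add: add_pos_nonneg)
    have "(G has_real_derivative (2 * npdf x / (1 + x\<^sup>2)\<^sup>2)) (at x)"
      unfolding G_def using pos
      apply (auto intro!: derivative_eq_intros)
      apply (simp add: divide_simps)
      apply (simp add: algebra_simps power2_eq_square)
      done
    moreover have "2 * npdf x / (1 + x\<^sup>2)\<^sup>2 > 0" using pos by (simp add: npdf_pos)
    ultimately show "\<exists>y. DERIV G x :> y \<and> 0 < y"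
      by blast
  qed (use lim in simp)
  then show ?thesis unfolding G_def by simp
qed

definition R :: "real \<Rightarrow> real" where "R t = ncdf t / npdf t"

lemma R_deriv: "(R has_real_derivative (1 + t * R t)) (at t)"
proof -
  have "((\<lambda>t. ncdf t / npdf t) has_real_derivative (1 + t * R t)) (at t)"
    using npdf_pos[of t]
    by (auto intro!: derivative_eq_intros ncdf_deriv npdf_deriv simp: R_def field_simps power2_eq_square)
  then show ?thesis by (simp add: R_def[abs_def])
qed

lemma R_deriv_pos: "1 + t * R t > 0"
proof (cases "t < 0")
  case True
  have "ncdf t < npdf t / (- t)" by (rule mills_upper[OF True])
  then have "R t < 1 / (- t)" using npdf_pos[of t] True by (simp add: R_def field_simps)
  then have "- t * R t < 1" using True by (simp add: field_simps)
  then show ?thesis by simp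
next
  case False
  have "R t \<ge> 0" using ncdf_nonneg[of t] npdf_pos[of t] by (simp add: R_def)
  then have "t * R t \<ge> 0" using False by simp
  then show ?thesis by simp
qed

lemma R_deriv_upper:
  assumes t: "t < 0"
  shows "1 + t * R t < 1 / (1 + t\<^sup>2)"
proof -
  have pos: "1 + t\<^sup>2 > 0" by (simp add: add_pos_nonneg)
  have "ncdf t > - t * npdf t / (1 + t\<^sup>2)" using mills_lower[of t] by simp
  then have "R t > - t / (1 + t\<^sup>2)" using npdf_pos[of t] pos by (simp add: R_def field_simps)
  then have "t * R t < t * (- t / (1 + t\<^sup>2))" by (rule mult_strict_left_mono_neg[OF _ t])
  also have "\<dots> = 1 / (1 + t\<^sup>2) - 1" using pos by (simp add: field_simps power2_eq_square)
  finally show ?thesis by simp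
qed

lemma R_strict_mono: "u < v \<Longrightarrow> R u < R v"
  by (rule DERIV_pos_imp_increasing[where f=R]) (use R_deriv R_deriv_pos in blast)+

lemma R_key:
  assumes a: "a > 0" and y: "y > 0"
  shows "R (- a) - R (- a - y) < y / (1 + a * (a + y))"
proof -
  define F where "F s = R (- a) - R (- a - s) - s / (1 + a * (a + s))" for s
  have "F 0 > F y"
  proof (rule DERIV_neg_imp_decreasing[where f=F])
    fix s assume s: "0 \<le> s" "s \<le> y"
    let ?t = "a + s"
    have d: "1 + a * (a + s) > 0" using a s by (simp add: add_pos_nonneg)
    have "(F has_real_derivative (1 + (- a - s) * R (- a - s) - (1 + a\<^sup>2) / (1 + a * (a + s))\<^sup>2)) (at s)"
      unfolding F_def using d
      apply (auto intro!: derivative_eq_intros DERIV_chain2[OF R_deriv])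
      apply (simp add: divide_simps)
      apply (simp add: algebra_simps power2_eq_square)
      done
    moreover have "1 + (- a - s) * R (- a - s) - (1 + a\<^sup>2) / (1 + a * (a + s))\<^sup>2 < 0"
    proof -
      have "1 + (- a - s) * R (- a - s) < 1 / (1 + (- a - s)\<^sup>2)"
        by (rule R_deriv_upper) (use a s in simp)
      also have "\<dots> \<le> (1 + a\<^sup>2) / (1 + a * (a + s))\<^sup>2"
      proof -
        have p1: "1 + (- a - s)\<^sup>2 > 0" by (simp add: add_pos_nonneg)
        have "(1 + a * (a + s))\<^sup>2 \<le> (1 + a\<^sup>2) * (1 + (- a - s)\<^sup>2)"
        proof -
          have "0 \<le> (a - (a + s))\<^sup>2" by simp
          then show ?thesis by (simp add: power2_eq_square algebra_simps)
        qed
        then show ?thesis using p1 d by (simp add: divide_simps mult.commute)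
      qed
      finally show ?thesis by simp
    qed
    ultimately show "\<exists>z. DERIV F s :> z \<and> z < 0" by blast
  qed (use y in simp)
  then show ?thesis unfolding F_def by simp
qed

lemma ncdf_R: "ncdf t = npdf t * R t"
  using npdf_pos[of t] by (simp add: R_def)

lemma npdf_d2:
  assumes y: "y > 0"
  shows "exp k * npdf (d2 k y) = npdf (d1 k y)"
proof -
  have "k + (- (d2 k y)\<^sup>2 / 2) = - (d1 k y)\<^sup>2 / 2"
    using y by (simp add: d1_def d2_def power2_eq_square field_simps)
  then have "exp k * exp (- (d2 k y)\<^sup>2 / 2) = exp (- (d1 k y)\<^sup>2 / 2)"
    by (metis exp_add)
  then show ?thesis unfolding npdf_def by (metis times_divide_eq_right)
qed

lemma d2_d1: "d2 k y = d1 k y - y"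
  by (simp add: d1_def d2_def)

lemma C_V_R:
  assumes y: "y > 0"
  shows "C_V k y = R (d1 k y) - R (d2 k y)"
proof -
  have "C_BS k y = npdf (d1 k y) * R (d1 k y) - exp k * npdf (d2 k y) * R (d2 k y)"
    by (simp add: C_BS_def ncdf_R)
  also have "\<dots> = npdf (d1 k y) * (R (d1 k y) - R (d2 k y))"
    using npdf_d2[OF y, of k] by (simp add: algebra_simps)
  finally show ?thesis using npdf_pos[of "d1 k y"] by (simp add: C_V_def)
qed

lemma C_V_pos: "y > 0 \<Longrightarrow> C_V k y > 0"
  using R_strict_mono[of "d2 k y" "d1 k y"] by (simp add: C_V_R d2_d1)

lemma C_BS_C_V: "C_BS k y = npdf (d1 k y) * C_V k y"
  using npdf_pos[of "d1 k y"] by (simp add: C_V_def)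

lemma C_BS_pos: "y > 0 \<Longrightarrow> C_BS k y > 0"
  using C_V_pos[of y k] npdf_pos[of "d1 k y"] by (simp add: C_BS_C_V)

lemma C_BS_deriv:
  assumes y: "y > 0"
  shows "(C_BS k has_real_derivative npdf (d1 k y)) (at y)"
proof -
  have eq: "C_BS k = (\<lambda>y. ncdf (- k / y + y / 2) - exp k * ncdf (- k / y - y / 2))"
    by (rule ext) (simp add: C_BS_def d1_def d2_def)
  have "(C_BS k has_real_derivative
          npdf (d1 k y) * (k / y\<^sup>2 + 1/2) - exp k * npdf (d2 k y) * (k / y\<^sup>2 - 1/2)) (at y)"
    unfolding eq using y
    by (auto intro!: derivative_eq_intros simp: d1_def d2_def power2_eq_square field_simps)
  also have "npdf (d1 k y) * (k / y\<^sup>2 + 1/2) - exp k * npdf (d2 k y) * (k / y\<^sup>2 - 1/2)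
      = npdf (d1 k y)"
    using npdf_d2[OF y, of k] by (simp add: algebra_simps)
  finally show ?thesis .
qed

lemma C_V_deriv:
  assumes y: "y > 0"
  shows "(C_V k has_real_derivative (1 + C_V k y * d1 k y * (k / y\<^sup>2 + 1/2))) (at y)"
proof -
  have d1d: "(d1 k has_real_derivative (k / y\<^sup>2 + 1/2)) (at y)"
  proof -
    have eq: "d1 k = (\<lambda>y. - k / y + y / 2)" by (rule ext) (simp add: d1_def)
    show ?thesis unfolding eq using y
      by (auto intro!: derivative_eq_intros simp: power2_eq_square field_simps)
  qed
  have eq: "C_V k = (\<lambda>y. C_BS k y / npdf (d1 k y))" by (rule ext) (simp add: C_V_def)
  have "(C_V k has_real_derivative
     (npdf (d1 k y) * npdf (d1 k y) - C_BS k y * ((- d1 k y * npdf (d1 k y)) * (k / y\<^sup>2 + 1/2)))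
       / (npdf (d1 k y) * npdf (d1 k y))) (at y)"
    unfolding eq
    by (rule DERIV_divide[OF C_BS_deriv[OF y] npdf_deriv_chain[OF d1d]]) (use npdf_pos[of "d1 k y"] in simp)
  also have "(npdf (d1 k y) * npdf (d1 k y) - C_BS k y * ((- d1 k y * npdf (d1 k y)) * (k / y\<^sup>2 + 1/2)))
       / (npdf (d1 k y) * npdf (d1 k y)) = 1 + C_V k y * d1 k y * (k / y\<^sup>2 + 1/2)"
    using npdf_pos[of "d1 k y"] by (simp add: C_V_def field_simps)
  finally show ?thesis .
qed

lemma C_V_deriv_nonneg:
  assumes y: "y > 0" and k: "k \<ge> 0"
  shows "1 + C_V k y * d1 k y * (k / y\<^sup>2 + 1/2) \<ge> 0"
proof (cases "d1 k y \<ge> 0")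
  case True
  have "k / y\<^sup>2 + 1/2 \<ge> 0" using k by simp
  then show ?thesis using True C_V_pos[OF y, of k] by (simp add: add_nonneg_nonneg)
next
  case False
  define a where "a = - d1 k y"
  have a: "a > 0" using False by (simp add: a_def)
  have d1a: "d1 k y = - a" by (simp add: a_def)
  have d2a: "d2 k y = - a - y" by (simp add: d2_d1 d1a)
  have kk: "k = y\<^sup>2 / 2 + a * y"
    using d1a y by (simp add: d1_def field_simps power2_eq_square)
  have fac: "k / y\<^sup>2 + 1/2 = (a + y) / y"
    using y by (simp add: kk field_simps power2_eq_square)
  have CV: "C_V k y < y / (1 + a * (a + y))"
    using R_key[OF a y] by (simp add: C_V_R[OF y] d1a d2a)
  have p: "a * (a + y) / y > 0" using a y by simp
  have "C_V k y * a * ((a + y) / y) = C_V k y * (a * (a + y) / y)" by simp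
  also have "\<dots> < y / (1 + a * (a + y)) * (a * (a + y) / y)"
    by (rule mult_strict_right_mono[OF CV p])
  also have "\<dots> = a * (a + y) / (1 + a * (a + y))"
  proof -
    have q: "1 + a * (a + y) > 0" using a y by (simp add: add_pos_pos)
    show ?thesis using y q by (simp add: divide_simps)
  qed
  also have "\<dots> < 1" using a y by (simp add: add_pos_pos)
  finally have "C_V k y * a * ((a + y) / y) < 1" .
  then show ?thesis by (simp add: d1a fac)
qed

lemma C_V_mono:
  assumes "0 < y" "y \<le> z" "k \<ge> 0"
  shows "C_V k y \<le> C_V k z"
proof (rule DERIV_nonneg_imp_nondecreasing[where f="C_V k"])
  fix x assume "y \<le> x" "x \<le> z"
  then have x: "x > 0" using assms by simp
  show "\<exists>d. DERIV (C_V k) x :> d \<and> 0 \<le> d"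
    using C_V_deriv[OF x, of k] C_V_deriv_nonneg[OF x assms(3)] by blast
qed (use assms in simp)

lemma C_BS_strict_mono:
  assumes "0 < y" "y < z"
  shows "C_BS k y < C_BS k z"
proof (rule DERIV_pos_imp_increasing[where f="C_BS k"])
  fix x assume "y \<le> x" "x \<le> z"
  then have x: "x > 0" using assms by simp
  show "\<exists>d. DERIV (C_BS k) x :> d \<and> 0 < d"
    using C_BS_deriv[OF x, of k] npdf_pos[of "d1 k x"] by blast
qed (use assms in simp)

lemma N_eq:
  assumes y: "y > 0" and c: "c > 0"
  shows "newton_map k c y = y + (ln c - ln (C_BS k y)) * C_V k y"
proof -
  have p1: "npdf (d1 k y) > 0" by (rule npdf_pos)
  have p2: "C_V k y > 0" by (rule C_V_pos[OF y])
  have "ln (C_BS k y) = ln (npdf (d1 k y)) + ln (C_V k y)"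
    using p1 p2 by (simp add: C_BS_C_V ln_mult)
  moreover have "ln (npdf (d1 k y)) = - (d1 k y)\<^sup>2 / 2 - ln (sqrt (2 * pi))"
    unfolding npdf_def by (simp add: ln_div)
  moreover have "ln (c * sqrt (2 * pi)) = ln c + ln (sqrt (2 * pi))"
    using c by (simp add: ln_mult)
  ultimately have e1: "ln (C_V k y) = ln (C_BS k y) + (d1 k y)\<^sup>2 / 2 + ln (sqrt (2 * pi))"
    and e2: "ln (c * sqrt (2 * pi)) = ln c + ln (sqrt (2 * pi))" by linarith+
  show ?thesis
    unfolding newton_map_def e1 e2 by (simp add: algebra_simps)
qed

lemma lnC_deriv:
  assumes y: "y > 0"
  shows "((\<lambda>y. ln (C_BS k y) - ln c) has_real_derivative 1 / C_V k y) (at y)"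
proof -
  have "((\<lambda>y. ln (C_BS k y) - ln c) has_real_derivative npdf (d1 k y) / C_BS k y - 0) (at y)"
    using C_BS_pos[OF y, of k]
    by (auto intro!: derivative_eq_intros C_BS_deriv[OF y])
  also have "npdf (d1 k y) / C_BS k y - 0 = 1 / C_V k y"
    using npdf_pos[of "d1 k y"] by (simp add: C_V_def)
  finally show ?thesis .
qed

theorem proposition6:
  fixes k c \<sigma> :: real and g :: "real \<Rightarrow> real"
  assumes k: "k \<ge> 0"
    and c: "0 < c" "c < 1"
    and sigma: "\<sigma> > 0" "C_BS k \<sigma> = c"
    and g_def: "\<And>y. y > 0 \<Longrightarrow> g y = ln (C_BS k y) - ln c"
  shows "(\<forall>y>0. g differentiable (at y) \<and>
              y - g y / deriv g y = newton_map k c y)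
    \<and> (\<forall>\<sigma>0 :: real. 0 < \<sigma>0 \<and> \<sigma>0 \<le> \<sigma> \<longrightarrow>
          (let s = (\<lambda>n. (newton_map k c ^^ n) \<sigma>0) in
             incseq s \<and> (\<forall>n. s n \<le> \<sigma>) \<and> s \<longlonglongrightarrow> \<sigma>))"
proof (intro conjI allI impI)
  fix y :: real assume y: "y > 0"
  have D: "(g has_real_derivative 1 / C_V k y) (at y)"
    by (rule has_field_derivative_transform_within_open[OF lnC_deriv[OF y], where S="{0<..}"])
       (use y g_def in auto)
  then show "g differentiable (at y)"
    by (auto simp: differentiable_def has_field_derivative_def)
  have "deriv g y = 1 / C_V k y" by (rule DERIV_imp_deriv[OF D])
  then show "y - g y / deriv g y = newton_map k c y"
    using C_V_pos[OF y, of k] by (simp add: N_eq[OF y c(1)] g_def[OF y] algebra_simps)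
next
  fix \<sigma>0 :: real assume s0: "0 < \<sigma>0 \<and> \<sigma>0 \<le> \<sigma>"
  define N where "N = newton_map k c"
  define s where "s n = (N ^^ n) \<sigma>0" for n
  have step: "y \<le> N y \<and> N y \<le> \<sigma>" if y: "0 < y" "y \<le> \<sigma>" for y
  proof
    have CV: "C_V k y > 0" by (rule C_V_pos) (use y in simp)
    have "C_BS k y \<le> c"
      using C_BS_strict_mono[of y \<sigma> k] y sigma by (cases "y = \<sigma>") auto
    then have "ln (C_BS k y) \<le> ln c" using C_BS_pos[of y k] y by simp
    then show "y \<le> N y" unfolding N_def using CV by (simp add: N_eq[OF y(1) c(1)])
    define P where "P t = ln (C_BS k t) - (t - y) / C_V k y" for t
    have "P \<sigma> \<le> P y"
    proof (rule DERIV_nonpos_imp_nonincreasing[where f=P])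
      fix t assume t: "y \<le> t" "t \<le> \<sigma>"
      then have tp: "t > 0" using y by simp
      have "(P has_real_derivative (1 / C_V k t - 1 / C_V k y)) (at t)"
      proof -
        have "((\<lambda>t. (ln (C_BS k t) - ln c) + ln c - (t - y) / C_V k y) has_real_derivative
             (1 / C_V k t + 0 - (1 - 0) / C_V k y)) (at t)"
          by (rule DERIV_diff[OF DERIV_add[OF lnC_deriv[OF tp] DERIV_const]
                DERIV_cdivide[OF DERIV_diff[OF DERIV_ident DERIV_const]]])
        moreover have "(\<lambda>t. (ln (C_BS k t) - ln c) + ln c - (t - y) / C_V k y) = P"
          by (rule ext) (simp add: P_def)
        ultimately show ?thesis by simp
      qed
      moreover have "1 / C_V k t - 1 / C_V k y \<le> 0"
        using C_V_mono[of y t k] t y k CV by (simp add: frac_le)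
      ultimately show "\<exists>d. DERIV P t :> d \<and> d \<le> 0" by blast
    qed (use y in simp)
    then have "ln c - (\<sigma> - y) / C_V k y \<le> ln (C_BS k y)" by (simp add: P_def sigma)
    then have "(ln c - ln (C_BS k y)) \<le> (\<sigma> - y) / C_V k y" by simp
    then have "(ln c - ln (C_BS k y)) * C_V k y \<le> \<sigma> - y" using CV by (simp add: pos_le_divide_eq)
    then show "N y \<le> \<sigma>" unfolding N_def by (simp add: N_eq[OF y(1) c(1)])
  qed
  have bnd: "0 < s n \<and> s n \<le> \<sigma>" for n
  proof (induction n)
    case 0 then show ?case using s0 by (simp add: s_def)
  next
    case (Suc n)
    have "s (Suc n) = N (s n)" by (simp add: s_def)
    then show ?case using step[of "s n"] Suc by auto
  qed
  have inc: "incseq s"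
  proof (rule incseq_SucI)
    fix n
    have "s (Suc n) = N (s n)" by (simp add: s_def)
    then show "s n \<le> s (Suc n)" using step[of "s n"] bnd[of n] by auto
  qed
  obtain L where L: "s \<longlonglongrightarrow> L" "\<forall>i. s i \<le> L"
    using incseq_convergent[OF inc, of \<sigma>] bnd by blast
  have Lpos: "L > 0"
  proof -
    have "s 0 \<le> L" using L(2) by blast
    then show ?thesis using bnd[of 0] by linarith
  qed
  have Lle: "L \<le> \<sigma>" using L(1) bnd by (intro LIMSEQ_le_const2) auto
  have cont: "isCont N L"
  proof -
    have eqN: "N = (\<lambda>y. y + ((d1 k y)\<^sup>2 / 2 - ln (C_V k y) + ln (c * sqrt (2 * pi))) * C_V k y)"
      by (rule ext) (simp add: N_def newton_map_def)
    have cv: "isCont (C_V k) L" by (rule DERIV_isCont[OF C_V_deriv[OF Lpos]])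
    have cd: "isCont (d1 k) L"
    proof -
      have "d1 k = (\<lambda>y. - k / y + y / 2)" by (rule ext) (simp add: d1_def)
      then show ?thesis using Lpos by (auto intro!: continuous_intros)
    qed
    show ?thesis unfolding eqN
      using cv cd C_V_pos[OF Lpos, of k]
      by (auto intro!: continuous_intros)
  qed
  have "(\<lambda>n. N (s n)) \<longlonglongrightarrow> N L" by (rule isCont_tendsto_compose[OF cont L(1)])
  moreover have "(\<lambda>n. N (s n)) = (\<lambda>n. s (Suc n))" by (rule ext) (simp add: s_def)
  ultimately have "(\<lambda>n. s (Suc n)) \<longlonglongrightarrow> N L" by simp
  moreover have "(\<lambda>n. s (Suc n)) \<longlonglongrightarrow> L" using L(1) by (rule LIMSEQ_Suc)
  ultimately have fixL: "N L = L" by (rule LIMSEQ_unique)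
  then have "(ln c - ln (C_BS k L)) * C_V k L = 0"
    unfolding N_def by (simp add: N_eq[OF Lpos c(1)])
  then have "ln (C_BS k L) = ln c" using C_V_pos[OF Lpos, of k] by simp
  then have CL: "C_BS k L = c" using C_BS_pos[OF Lpos, of k] c by simp
  have "L = \<sigma>"
  proof (rule ccontr)
    assume "L \<noteq> \<sigma>"
    then have "L < \<sigma>" using Lle by simp
    then have "C_BS k L < C_BS k \<sigma>" by (rule C_BS_strict_mono[OF Lpos])
    then show False using CL sigma by simp
  qed
  then show "let s = (\<lambda>n. (newton_map k c ^^ n) \<sigma>0) in
             incseq s \<and> (\<forall>n. s n \<le> \<sigma>) \<and> s \<longlonglongrightarrow> \<sigma>"
    using inc bnd L(1) unfolding Let_def s_def N_def by auto
qed

end
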